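(* Let $\rho,\alpha,\lambda>0$ with $\rho,\lambda\in(0,1]$. Let $\mathcal{X}$ be a feature space, $D$ a joint distribution over pairs $(y,x)$ with $y\in\{0,1\}$ and $x\in\mathcal{X}$, $R:\mathcal{X}\to[0,1]$ a model, and $\mathcal{C}\subseteq 2^{\mathcal{X}}$ a collection of subsets. Suppose predictions are binned by the $(\lambda,\rho)$-geometric discretization $\Lambda_\lambda^\rho$, that $\mathbb{E}_D[y\mid R\in I, x\in S]\ge\rho$ for all $S\in\mathcal{C}$ and bins $I$, and that $R$ satisfies $(\alpha,\lambda)$-proportional multicalibration on $\mathcal{C}$ with respect to these bins. Then $R$ is at most $(\alpha\rho^{-\lambda}+\rho^{-\lambda}-1)$-proportionally multicalibrated on $\mathcal{C}$.
   Context: The $(\lambda,\rho)$-geometric discretization of $[0,1]$ is the set of intervals $\Lambda_\lambda^\rho=\{I_j\}_{j=0}^{1/\lambda-1}$ with $I_j=[\rho^{(1-j\lambda)},\rho^{(1-j\lambda-\lambda)})$. $R$ is $(\alpha,\lambda)$-proportionally multicalibrated on $\mathcal{C}$ (with respect to a set of bins) if for all $S\in\mathcal{C}$ and bins $I$ with $P_D(R\in I\mid x\in S)\ge\alpha\lambda$, $\frac{|\mathbb{E}_D[y\mid R\in I, x\in S]-\mathbb{E}_D[R\mid R\in I, x\in S]|}{\mathbb{E}_D[y\mid R\in I, x\in S]}\le\alpha$. For $\delta>0$, $R$ is $\delta$-proportionally multicalibrated on $\mathcal{C}$ if for every $S\in\mathcal{C}$ there exists $S'\subseteq S$ with $|S'|\ge(1-\delta)|S|$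 such that for all $r\in[0,1]$, $|\mathbb{E}_D[y\mid R=r, x\in S']-r|\le\delta\,\mathbb{E}_D[y\mid R=r, x\in S']$. "At most $\delta$-proportionally multicalibrated" means $\delta$-proportionally multicalibrated for this value of $\delta$. *)

theory Defs
  imports "HOL-Probability.Probability"
begin

text \<open>Samples are pairs z = (y, x) with label y = fst z (a real in {0,1}) and feature x = snd z.\<close>

definition geo_bin :: "real \<Rightarrow> real \<Rightarrow> nat \<Rightarrow> real set" where
  "geo_bin \<rho> lam j = {\<rho> powr (1 - real j * lam) ..< \<rho> powr (1 - real j * lam - lam)}"

definition geo_discretization :: "real \<Rightarrow> real \<Rightarrow> real set set" where
  "geo_discretization lam \<rho> = geo_bin \<rho> lam ` {j. real j < 1 / lam}"

definition feat_event :: "'x set \<Rightarrow> (real \<times> 'x) set" where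
  "feat_event S = {z. snd z \<in> S}"

definition pred_event :: "('x \<Rightarrow> real) \<Rightarrow> real set \<Rightarrow> (real \<times> 'x) set" where
  "pred_event R I = {z. R (snd z) \<in> I}"

definition cprob :: "(real \<times> 'x) measure \<Rightarrow> (real \<times> 'x) set \<Rightarrow> (real \<times> 'x) set \<Rightarrow> real" where
  "cprob D B A = measure D (B \<inter> A) / measure D A"

definition cexp :: "(real \<times> 'x) measure \<Rightarrow> ((real \<times> 'x) \<Rightarrow> real) \<Rightarrow> (real \<times> 'x) set \<Rightarrow> real" where
  "cexp D f A = (LINT z:A|D. f z) / measure D A"

definition prop_multical_bins ::
  "(real \<times> 'x) measure \<Rightarrow> ('x \<Rightarrow> real) \<Rightarrow> 'x set set \<Rightarrow> real \<Rightarrow> real \<Rightarrow> real set set \<Rightarrow> bool" where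
  "prop_multical_bins D R C \<alpha> lam bins \<longleftrightarrow>
     (\<forall>S\<in>C. \<forall>I\<in>bins.
        cprob D (pred_event R I) (feat_event S) \<ge> \<alpha> * lam \<longrightarrow>
        \<bar>cexp D fst (pred_event R I \<inter> feat_event S) - cexp D (\<lambda>z. R (snd z)) (pred_event R I \<inter> feat_event S)\<bar>
          / cexp D fst (pred_event R I \<inter> feat_event S) \<le> \<alpha>)"

text \<open>delta-proportional multicalibration, where (predictions being binned) the event
  "R = r" is the event that R falls in the bin containing r; the mass |S'| is the
  probability mass P_D(x in S').\<close>
definition delta_prop_multical ::
  "(real \<times> 'x) measure \<Rightarrow> ('x \<Rightarrow> real) \<Rightarrow> 'x set set \<Rightarrow> real set set \<Rightarrow> real \<Rightarrow> bool" where
  "delta_prop_multical D R C bins \<delta> \<longleftrightarrow>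
     (\<forall>S\<in>C. \<exists>S'. S' \<subseteq> S \<and> feat_event S' \<in> sets D \<and>
        measure D (feat_event S') \<ge> (1 - \<delta>) * measure D (feat_event S) \<and>
        (\<forall>I\<in>bins. \<forall>r\<in>I. measure D (pred_event R I \<inter> feat_event S') > 0 \<longrightarrow>
           \<bar>cexp D fst (pred_event R I \<inter> feat_event S') - r\<bar>
             \<le> \<delta> * cexp D fst (pred_event R I \<inter> feat_event S')))"

end

theory Submission
  imports Defs
begin
lemma arith_aux:
  fixes e t \<alpha> m a r :: real
  assumes "0<e" "1 \<le> t" "0<\<alpha>" "\<bar>e-m\<bar> \<le> \<alpha>*e" "a \<le> m" "m \<le> a*t" "a \<le> r" "r < a*t"
  shows "\<bar>e - r\<bar> \<le> (\<alpha>*t + t - 1)*e"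
proof (cases "r \<ge> e")
  case True
  have "m*t \<le> (1+\<alpha>)*e*t" using assms by (intro mult_right_mono) (auto simp: algebra_simps abs_le_iff)
  have "a*t \<le> m*t" using assms by (intro mult_right_mono) auto
  have eq: "(1+\<alpha>)*e*t - e = (\<alpha>*t+t-1)*e" by (simp add: algebra_simps)
  have "r - e \<le> (\<alpha>*t+t-1)*e" using \<open>a*t \<le> m*t\<close> \<open>m*t \<le> (1+\<alpha>)*e*t\<close> eq assms(8) by linarith
  thus ?thesis using True by simp
next
  case False
  have "(1-\<alpha>)*e \<le> a*t" using assms by (auto simp: algebra_simps abs_le_iff)
  have tt: "1*1 \<le> t*t" using assms(2) by (intro mult_mono) auto
  have "e*((t-1)^2 + \<alpha>*(t*t-1)) \<ge> 0" using assms tt by (intro mult_nonneg_nonneg) (auto intro!: add_nonneg_nonneg)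
  hence "(e - a)*t \<le> ((\<alpha>*t + t - 1)*e)*t" using \<open>(1-\<alpha>)*e \<le> a*t\<close>
    by (simp add: algebra_simps power2_eq_square)
  hence "e - a \<le> (\<alpha>*t + t - 1)*e" using assms by (simp add: mult_le_cancel_right)
  thus ?thesis using False assms by auto
qed

lemma geo_bin_disj:
  assumes "0 < \<rho>" "\<rho> \<le> 1" "0 < lam" "i < j"
  shows "geo_bin \<rho> lam i \<inter> geo_bin \<rho> lam j = {}"
proof -
  have "\<rho> powr (1 - real i * lam - lam) \<le> \<rho> powr (1 - real j * lam)"
  proof (cases "\<rho> = 1")
    case False
    have "real i * lam + lam \<le> real j * lam" using assms
      by (metis Suc_leI distrib_right mult_le_cancel_right mult_1 of_nat_Suc of_nat_le_iff add.commute less_le_not_le)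
    thus ?thesis using assms False by (intro powr_mono') auto
  qed simp
  thus ?thesis unfolding geo_bin_def by auto
qed

theorem claim18:
  fixes D :: "(real \<times> 'x) measure" and R :: "'x \<Rightarrow> real" and C :: "'x set set"
    and \<rho> \<alpha> lam :: real
  assumes "0 < \<rho>" "\<rho> \<le> 1" "0 < \<alpha>" "0 < lam" "lam \<le> 1"
    and "\<exists>m::nat. real m = 1 / lam"
    and "prob_space D"
    and "fst \<in> borel_measurable D"
    and "AE z in D. fst z \<in> {0, 1}"
    and "(\<lambda>z. R (snd z)) \<in> borel_measurable D"
    and "\<And>x. R x \<in> {0..1}"
    and "\<And>S. S \<in> C \<Longrightarrow> feat_event S \<in> sets D"
    and "\<And>S I. S \<in> C \<Longrightarrow> I \<in> geo_discretization lam \<rho> \<Longrightarrow>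
           measure D (pred_event R I \<inter> feat_event S) > 0 \<Longrightarrow>
           cexp D fst (pred_event R I \<inter> feat_event S) \<ge> \<rho>"
    and "prop_multical_bins D R C \<alpha> lam (geo_discretization lam \<rho>)"
  shows "delta_prop_multical D R C (geo_discretization lam \<rho>)
           (\<alpha> * \<rho> powr (-lam) + \<rho> powr (-lam) - 1)"
proof -
  interpret prob_space D by fact
  obtain M :: nat where M: "real M = 1/lam" using assms(6) by blast
  let ?bins = "geo_discretization lam \<rho>"
  define t where "t = \<rho> powr (-lam)"
  define \<delta> where "\<delta> = \<alpha> * t + t - 1"
  have t1: "1 \<le> t"
  proof -
    have "\<rho> powr lam \<le> 1" using assms(1,2,4) by (simp add: powr_le1)
    moreover have "0 < \<rho> powr lam" using assms(1) by simp
    ultimately show ?thesis unfolding t_def using assms(1) by (simp add: powr_minus field_simps)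
  qed
  have dge: "\<alpha> \<le> \<delta>" unfolding \<delta>_def using t1 assms(3)
    by (smt (verit) mult_le_cancel_left1)
  have idx: "{j. real j < 1/lam} = {..<M}" using M by auto
  have finbins: "finite ?bins" unfolding geo_discretization_def idx by simp
  have cardbins: "card ?bins \<le> M" unfolding geo_discretization_def idx
    using card_image_le[of "{..<M}"] by simp
  have intfst: "integrable D fst"
    by (rule integrable_const_bound[where B=1]) (use assms(8,9) in \<open>auto elim!: AE_mp\<close>)
  have intR: "integrable D (\<lambda>z. R (snd z))"
    by (rule integrable_const_bound[where B=1]) (use assms(10,11) in \<open>auto simp: abs_le_iff\<close>)
  have binborel: "I \<in> sets borel" if "I \<in> ?bins" for I
    using that by (auto simp: geo_discretization_def geo_bin_def)
  have predS_meas: "pred_event R I \<inter> feat_event S \<in> sets D" if "S \<in> C" "I \<in> ?bins" for I S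
  proof -
    have "feat_event S \<subseteq> space D" using assms(12)[OF that(1)] sets.sets_into_space by blast
    hence "pred_event R I \<inter> feat_event S = ((\<lambda>z. R (snd z)) -` I \<inter> space D) \<inter> feat_event S"
      by (auto simp: pred_event_def)
    moreover have "(\<lambda>z. R (snd z)) -` I \<inter> space D \<in> sets D"
      using measurable_sets[OF assms(10) binborel[OF that(2)]] .
    ultimately show ?thesis using assms(12)[OF that(1)] by auto
  qed
  have disj: "I \<inter> J = {}" if IJ: "I \<in> ?bins" "J \<in> ?bins" "I \<noteq> J" for I J
  proof -
    obtain i j where ij: "I = geo_bin \<rho> lam i" "J = geo_bin \<rho> lam j"
      using IJ(1,2) unfolding geo_discretization_def by auto
    with IJ(3) have "i < j \<or> j < i" by auto
    thus ?thesis using geo_bin_disj[OF assms(1,2,4)] ij by blast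
  qed
  show ?thesis unfolding delta_prop_multical_def t_def[symmetric] \<delta>_def[symmetric]
  proof
    fix S assume S: "S \<in> C"
    define small where "small = {I\<in>?bins. cprob D (pred_event R I) (feat_event S) < \<alpha>*lam}"
    define S' where "S' = {x\<in>S. \<forall>J\<in>small. R x \<notin> J}"
    define U where "U = (\<Union>J\<in>small. pred_event R J \<inter> feat_event S)"
    have finsmall: "finite small" using finbins unfolding small_def by simp
    have cardsmall: "card small \<le> M" using card_mono[OF finbins, of small] cardbins
      unfolding small_def by auto
    have Umeas: "U \<in> sets D" unfolding U_def using finsmall predS_meas[OF S]
      by (intro sets.finite_UN) (auto simp: small_def)
    have FS: "feat_event S \<in> sets D" using assms(12)[OF S] .
    have UsubS: "U \<subseteq> feat_event S" unfolding U_def by auto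
    have feq: "feat_event S' = feat_event S - U"
      by (auto simp: S'_def U_def feat_event_def pred_event_def)
    have "measure D U \<le> (\<Sum>J\<in>small. measure D (pred_event R J \<inter> feat_event S))"
      unfolding U_def using finsmall predS_meas[OF S]
      by (intro finite_measure_subadditive_finite) (auto simp: small_def)
    also have "\<dots> \<le> (\<Sum>J\<in>small. \<alpha>*lam*measure D (feat_event S))"
    proof (rule sum_mono)
      fix J assume J: "J \<in> small"
      have JS: "pred_event R J \<inter> feat_event S \<in> sets D" using J predS_meas[OF S] by (auto simp: small_def)
      have le: "measure D (pred_event R J \<inter> feat_event S) \<le> measure D (feat_event S)"
        using JS FS by (intro finite_measure_mono) auto
      show "measure D (pred_event R J \<inter> feat_event S) \<le> \<alpha>*lam*measure D (feat_event S)"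
      proof (cases "measure D (feat_event S) = 0")
        case True thus ?thesis using le measure_nonneg[of D "pred_event R J \<inter> feat_event S"] by simp
      next
        case False
        hence p: "measure D (feat_event S) > 0" using measure_nonneg[of D "feat_event S"] by linarith
        have "measure D (pred_event R J \<inter> feat_event S) / measure D (feat_event S) < \<alpha>*lam"
          using J by (simp add: small_def cprob_def)
        thus ?thesis using p by (simp add: divide_less_eq)
      qed
    qed
    also have "\<dots> = real (card small) * (\<alpha>*lam*measure D (feat_event S))" by simp
    also have "\<dots> \<le> real M * (\<alpha>*lam*measure D (feat_event S))"
      using cardsmall assms(3,4) measure_nonneg[of D "feat_event S"]
      by (intro mult_right_mono) auto
    also have "\<dots> = \<alpha> * measure D (feat_event S)" using M assms(4) by (simp add: field_simps)
    finally have Ule: "measure D U \<le> \<alpha> * measure D (feat_event S)" .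
    have mS': "measure D (feat_event S') = measure D (feat_event S) - measure D U"
      unfolding feq by (rule finite_measure_Diff[OF FS Umeas UsubS])
    show "\<exists>S'\<subseteq>S. feat_event S' \<in> sets D \<and>
             (1 - \<delta>) * measure D (feat_event S) \<le> measure D (feat_event S') \<and>
             (\<forall>I\<in>?bins. \<forall>r\<in>I. 0 < measure D (pred_event R I \<inter> feat_event S') \<longrightarrow>
                 \<bar>cexp D fst (pred_event R I \<inter> feat_event S') - r\<bar>
                 \<le> \<delta> * cexp D fst (pred_event R I \<inter> feat_event S'))"
    proof (intro exI conjI ballI impI)
      show "S' \<subseteq> S" unfolding S'_def by auto
      show "feat_event S' \<in> sets D" unfolding feq using FS Umeas by auto
      have "(1 - \<delta>) * measure D (feat_event S) \<le> (1 - \<alpha>) * measure D (feat_event S)"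
        using dge measure_nonneg[of D "feat_event S"] by (intro mult_right_mono) auto
      thus "(1 - \<delta>) * measure D (feat_event S) \<le> measure D (feat_event S')"
        using mS' Ule by (simp add: algebra_simps)
    next
      fix I r assume I: "I \<in> ?bins" and r: "r \<in> I"
        and pos: "0 < measure D (pred_event R I \<inter> feat_event S')"
      have notsmall: "I \<notin> small"
      proof
        assume "I \<in> small"
        hence "pred_event R I \<inter> feat_event S' = {}" unfolding feq U_def by auto
        thus False using pos by simp
      qed
      have eqA: "pred_event R I \<inter> feat_event S' = pred_event R I \<inter> feat_event S"
      proof
        show "pred_event R I \<inter> feat_event S' \<subseteq> pred_event R I \<inter> feat_event S"
          by (auto simp: feat_event_def S'_def)
        show "pred_event R I \<inter> feat_event S \<subseteq> pred_event R I \<inter> feat_event S'"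
        proof
          fix z assume z: "z \<in> pred_event R I \<inter> feat_event S"
          have "\<forall>J\<in>small. R (snd z) \<notin> J"
          proof (intro ballI notI)
            fix J assume J: "J \<in> small" "R (snd z) \<in> J"
            have "J \<in> ?bins" "J \<noteq> I" using J(1) notsmall by (auto simp: small_def)
            hence "I \<inter> J = {}" using disj[OF I] by blast
            thus False using z J(2) by (auto simp: pred_event_def)
          qed
          thus "z \<in> pred_event R I \<inter> feat_event S'" using z
            by (auto simp: S'_def feat_event_def pred_event_def)
        qed
      qed
      define A where "A = pred_event R I \<inter> feat_event S"
      have Ameas: "A \<in> sets D" unfolding A_def using predS_meas[OF S I] .
      have posA: "0 < measure D A" using pos eqA A_def by simp
      define e where "e = cexp D fst A"
      define m where "m = cexp D (\<lambda>z. R (snd z)) A"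
      have eg: "\<rho> \<le> e" unfolding e_def A_def using assms(13)[OF S I] posA A_def by simp
      have epos: "0 < e" using eg assms(1) by linarith
      have "cprob D (pred_event R I) (feat_event S) \<ge> \<alpha> * lam"
        using notsmall I by (auto simp: small_def)
      hence "\<bar>e - m\<bar> / e \<le> \<alpha>" using assms(14) S I
        unfolding prop_multical_bins_def e_def m_def A_def by blast
      hence em: "\<bar>e - m\<bar> \<le> \<alpha> * e" using epos by (simp add: divide_le_eq)
      obtain j where j: "I = geo_bin \<rho> lam j" using I unfolding geo_discretization_def by auto
      define a where "a = \<rho> powr (1 - real j * lam)"
      have b: "\<rho> powr (1 - real j * lam - lam) = a * t"
        unfolding a_def t_def using assms(1) by (simp add: powr_add[symmetric])
      have Ieq: "I = {a..<a*t}" using j b unfolding geo_bin_def a_def by simp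
      have siR: "set_integrable D A (\<lambda>z. R (snd z))"
        unfolding set_integrable_def using Ameas intR by (rule integrable_mult_indicator)
      have sic: "set_integrable D A (\<lambda>z. c)" for c :: real
        unfolding set_integrable_def using Ameas by (intro integrable_mult_indicator) auto
      have "(LINT z:A|D. a) \<le> (LINT z:A|D. R (snd z))"
        using sic siR by (rule set_integral_mono) (auto simp: A_def pred_event_def Ieq)
      hence "measure D A * a \<le> (LINT z:A|D. R (snd z))" using Ameas by (simp add: set_integral_const)
      hence am: "a \<le> m" unfolding m_def cexp_def using posA by (simp add: le_divide_eq mult.commute)
      have "(LINT z:A|D. R (snd z)) \<le> (LINT z:A|D. a*t)"
        using siR sic by (rule set_integral_mono) (auto simp: A_def pred_event_def Ieq)
      hence "(LINT z:A|D. R (snd z)) \<le> measure D A * (a*t)" using Ameas by (simp add: set_integral_const mult_ac)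
      hence ma: "m \<le> a*t" unfolding m_def cexp_def using posA by (simp add: divide_le_eq mult.commute)
      have "\<bar>e - r\<bar> \<le> \<delta> * e" unfolding \<delta>_def
        using arith_aux[OF epos t1 assms(3) em am ma] r Ieq by auto
      thus "\<bar>cexp D fst (pred_event R I \<inter> feat_event S') - r\<bar>
             \<le> \<delta> * cexp D fst (pred_event R I \<inter> feat_event S')"
        unfolding eqA e_def A_def .
    qed
  qed
qed
end
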